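(* Fix $\sigma\in(0,\tfrac12)$. The following assertions hold for problem $(P_{\lambda,\mu})$ described in the context: (i) for every $\lambda>0$ there exists $\mu_0^{*}(\lambda)>0$ such that $(P_{\lambda,\mu})$ has no solution for every $\mu\in(0,\mu_0^{*}(\lambda))$; (ii) there exists $\lambda^{*}>0$ such that for every $\lambda\in(0,\lambda^{*})$ there exists $\mu_0^{**}(\lambda)>\mu_0^{*}(\lambda)$ such that $(P_{\lambda,\mu})$ has no solution for every $\mu>\mu_0^{**}(\lambda)$.
   Context: Let $\sigma\in(0,\tfrac12)$ be fixed and let $g(s)=s^2(1-s)$ for $s\in[0,1]$. For $\lambda>0$, $\mu>0$ define the step function $a_{\lambda,\mu}:[0,1]\to\mathbb{R}$ by $a_{\lambda,\mu}(t)=\lambda$ if $t\in[0,\sigma]\cup[1-\sigma,1]$ and $a_{\lambda,\mu}(t)=-\mu$ if $t\in(\sigma,1-\sigma)$. Problem $(P_{\lambda,\mu})$ is: $-u''(t)=a_{\lambda,\mu}(t)\,g(u(t))$ for $t\in(0,1)$, $0\le u(t)\le 1$ on $[0,1]$, $u'(0)=u'(1)=0$. A solution of $(P_{\lambda,\mu})$ is a function $u\in\mathcal{C}^1([0,1])$ with $u'$ absolutely continuous, $0<u(t)<1$ for all $t\in[0,1]$, which satisfies the differential equation for a.e. $t\in(0,1)$ and the Neumann conditions $u'(0)=u'(1)=0$. *)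

theory Defs
  imports "HOL-Analysis.Analysis"
begin

definition gnl :: "real \<Rightarrow> real" where
  "gnl s = s^2 * (1 - s)"

definition aw :: "real \<Rightarrow> real \<Rightarrow> real \<Rightarrow> real \<Rightarrow> real" where
  "aw \<sigma> lam mu t =
     (if t \<in> {0..\<sigma>} \<union> {1-\<sigma>..1} then lam else - mu)"

definition abs_cont_on :: "real \<Rightarrow> real \<Rightarrow> (real \<Rightarrow> real) \<Rightarrow> bool" where
  "abs_cont_on a b f \<longleftrightarrow>
     (\<forall>\<epsilon>>0. \<exists>\<delta>>0. \<forall>(n::nat) (l::nat \<Rightarrow> real) (r::nat \<Rightarrow> real).
        (\<forall>k<n. a \<le> l k \<and> l k \<le> r k \<and> r k \<le> b) \<and>
        (\<forall>k. Suc k < n \<longrightarrow> r k \<le> l (Suc k)) \<and>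
        (\<Sum>k<n. r k - l k) < \<delta>
        \<longrightarrow> (\<Sum>k<n. \<bar>f (r k) - f (l k)\<bar>) < \<epsilon>)"

definition is_solution :: "real \<Rightarrow> real \<Rightarrow> real \<Rightarrow> (real \<Rightarrow> real) \<Rightarrow> bool" where
  "is_solution \<sigma> lam mu u \<longleftrightarrow>
     (\<exists>u'. (\<forall>t\<in>{0..1}. (u has_real_derivative u' t) (at t within {0..1})) \<and>
           continuous_on {0..1} u' \<and>
           abs_cont_on 0 1 u' \<and>
           (\<forall>t\<in>{0..1}. 0 < u t \<and> u t < 1) \<and>
           (AE t in lborel. t \<in> {0<..<1} \<longrightarrow>
              (u' has_real_derivative - (aw \<sigma> lam mu t * gnl (u t))) (at t)) \<and>
           u' 0 = 0 \<and> u' 1 = 0)"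

end

theory Submission
  imports Defs
begin

lemma open_intervals_disj:
  fixes l r l' r' :: real
  assumes "l < r" "l' < r'" "{l<..<r} \<inter> {l'<..<r'} = {}"
  shows "r \<le> l' \<or> r' \<le> l"
proof (rule ccontr)
  assume "\<not> ?thesis"
  hence "l' < r" "l < r'" by auto
  let ?m = "(max l l' + min r r') / 2"
  have "max l l' < min r r'" using assms \<open>l' < r\<close> \<open>l < r'\<close> by simp
  hence "?m \<in> {l<..<r} \<inter> {l'<..<r'}" by (simp add: max_def min_def split: if_splits)
  thus False using assms by auto
qed

lemma ac_unordered:
  fixes f :: "real \<Rightarrow> real"
  assumes ac: "abs_cont_on a b f" and e: "\<epsilon> > 0"
  obtains \<delta> where "\<delta> > 0" "\<And>S. finite S \<Longrightarrow> (\<forall>x\<in>S. a \<le> fst x \<and> fst x \<le> snd x \<and> snd x \<le> b) \<Longrightarrow>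
      (\<forall>x\<in>S. \<forall>y\<in>S. x \<noteq> y \<longrightarrow> {fst x<..<snd x} \<inter> {fst y<..<snd y} = {}) \<Longrightarrow>
      (\<Sum>x\<in>S. snd x - fst x) < \<delta> \<Longrightarrow> (\<Sum>x\<in>S. \<bar>f (snd x) - f (fst x)\<bar>) < \<epsilon>"
proof -
  have "\<exists>\<delta>>0. \<forall>(n::nat) (l::nat\<Rightarrow>real) (r::nat\<Rightarrow>real). (\<forall>k<n. a \<le> l k \<and> l k \<le> r k \<and> r k \<le> b) \<and>
        (\<forall>k. Suc k < n \<longrightarrow> r k \<le> l (Suc k)) \<and> (\<Sum>k<n. r k - l k) < \<delta>
        \<longrightarrow> (\<Sum>k<n. \<bar>f (r k) - f (l k)\<bar>) < \<epsilon>"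
    using ac e unfolding abs_cont_on_def by simp
  then obtain \<delta> where d: "\<delta> > 0" and H: "\<And>n l r. (\<forall>k<n. a \<le> l k \<and> l k \<le> r k \<and> r k \<le> b) \<and>
        (\<forall>k. Suc k < n \<longrightarrow> r k \<le> l (Suc k)) \<and> (\<Sum>k<n. r k - l k) < \<delta>
        \<longrightarrow> (\<Sum>k<n. \<bar>f (r k) - f (l k)\<bar>) < \<epsilon>"
    by blast
  show ?thesis
  proof (rule that[OF d])
    fix S :: "(real \<times> real) set"
    assume fin: "finite S" and bnd: "\<forall>x\<in>S. a \<le> fst x \<and> fst x \<le> snd x \<and> snd x \<le> b"
      and dis: "\<forall>x\<in>S. \<forall>y\<in>S. x \<noteq> y \<longrightarrow> {fst x<..<snd x} \<inter> {fst y<..<snd y} = {}"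
      and sm: "(\<Sum>x\<in>S. snd x - fst x) < \<delta>"
    define S' where "S' = {x\<in>S. fst x < snd x}"
    have fin': "finite S'" using fin by (simp add: S'_def)
    have sub: "S' \<subseteq> S" by (auto simp: S'_def)
    have eq1: "(\<Sum>x\<in>S. snd x - fst x) = (\<Sum>x\<in>S'. snd x - fst x)"
      by (rule sum.mono_neutral_right[OF fin sub]) (use bnd in \<open>auto simp: S'_def\<close>)
    have eq2: "(\<Sum>x\<in>S. \<bar>f (snd x) - f (fst x)\<bar>) = (\<Sum>x\<in>S'. \<bar>f (snd x) - f (fst x)\<bar>)"
      by (rule sum.mono_neutral_right[OF fin sub]) (use bnd in \<open>force simp: S'_def order_le_less\<close>)
    have sep: "x \<in> S' \<Longrightarrow> y \<in> S' \<Longrightarrow> x \<noteq> y \<Longrightarrow> snd x \<le> fst y \<or> snd y \<le> fst x" for x y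
      using open_intervals_disj[of "fst x" "snd x" "fst y" "snd y"] dis sub by (auto simp: S'_def)
    have injf: "inj_on fst S'"
    proof (rule inj_onI)
      fix x y assume "x \<in> S'" "y \<in> S'" "fst x = fst y"
      thus "x = y" using sep[of x y] by (auto simp: S'_def)
    qed
    define R where "R t = snd (THE p. p \<in> S' \<and> fst p = t)" for t
    have Rp: "p \<in> S' \<Longrightarrow> R (fst p) = snd p" for p
    proof -
      assume p: "p \<in> S'"
      have "(THE q. q \<in> S' \<and> fst q = fst p) = p"
        using p injf by (intro the_equality) (auto dest: inj_onD)
      thus ?thesis by (simp add: R_def)
    qed
    define xs where "xs = sorted_list_of_set (fst ` S')"
    define n where "n = length xs"
    define l where "l k = xs ! k" for k
    define r where "r k = R (xs ! k)" for k
    have setxs: "set xs = fst ` S'" and dxs: "distinct xs" and sxs: "sorted_wrt (<) xs"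
      using fin' by (auto simp: xs_def)
    have mem: "k < n \<Longrightarrow> (l k, r k) \<in> S'" for k
    proof -
      assume "k < n"
      hence "xs ! k \<in> fst ` S'" using setxs by (auto simp: n_def)
      then obtain p where "p \<in> S'" "xs ! k = fst p" by auto
      thus ?thesis using Rp by (auto simp: l_def r_def)
    qed
    have sumeq: "(\<Sum>x\<in>S'. g x) = (\<Sum>k<n. g (l k, r k))" for g :: "real \<times> real \<Rightarrow> real"
    proof -
      have "(\<Sum>x\<in>S'. g x) = (\<Sum>x\<in>S'. g (fst x, R (fst x)))"
        by (rule sum.cong) (auto simp: Rp)
      also have "\<dots> = (\<Sum>t\<in>fst ` S'. g (t, R t))"
        by (simp add: sum.reindex[OF injf])
      also have "\<dots> = sum_list (map (\<lambda>t. g (t, R t)) xs)"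
        using sum.distinct_set_conv_list[OF dxs, of "\<lambda>t. g (t, R t)"] setxs by simp
      also have "\<dots> = (\<Sum>k<n. g (l k, r k))"
        by (simp add: sum_list_sum_nth n_def atLeast0LessThan l_def r_def)
      finally show ?thesis .
    qed
    have c1: "\<forall>k<n. a \<le> l k \<and> l k \<le> r k \<and> r k \<le> b"
      using mem bnd sub by fastforce
    have c2: "\<forall>k. Suc k < n \<longrightarrow> r k \<le> l (Suc k)"
    proof (intro allI impI)
      fix k assume k: "Suc k < n"
      have lt: "l k < l (Suc k)" using sxs k by (simp add: sorted_wrt_iff_nth_less n_def l_def)
      have i1: "(l k, r k) \<in> S'" "(l (Suc k), r (Suc k)) \<in> S'" using mem k by auto
      hence "r k \<le> l (Suc k) \<or> r (Suc k) \<le> l k" using sep[OF i1] lt by auto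
      moreover have "l (Suc k) < r (Suc k)" using i1 by (auto simp: S'_def)
      ultimately show "r k \<le> l (Suc k)" using lt by linarith
    qed
    have c3: "(\<Sum>k<n. r k - l k) < \<delta>" using sm eq1 sumeq[of "\<lambda>x. snd x - fst x"] by simp
    have "(\<Sum>k<n. \<bar>f (r k) - f (l k)\<bar>) < \<epsilon>" using H c1 c2 c3 by blast
    thus "(\<Sum>x\<in>S. \<bar>f (snd x) - f (fst x)\<bar>) < \<epsilon>" using eq2 sumeq[of "\<lambda>x. \<bar>f (snd x) - f (fst x)\<bar>"]
      by simp
  qed
qed


lemma tagged_interval_real:
  assumes "P tagged_division_of {p..q::real}" "(x,K) \<in> P"
  obtains c d where "K = {c..d}" "c \<le> x" "x \<le> d" "p \<le> c" "d \<le> q"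
proof -
  note PD = tagged_division_ofD[OF assms(1)]
  obtain c d where K: "K = cbox c d" using PD(4)[OF assms(2)] by blast
  hence K': "K = {c..d}" by simp
  have "x \<in> K" "K \<subseteq> {p..q}" using PD(2,3) assms(2) by auto
  hence "c \<le> x" "x \<le> d" "p \<le> c" "d \<le> q" using K' by auto
  thus ?thesis using that K' by blast
qed

lemma ac_ftc_le:
  fixes f \<Phi> \<phi> :: "real \<Rightarrow> real"
  assumes pq: "p \<le> q" and ac: "abs_cont_on a b f" and ap: "a \<le> p" and qb: "q \<le> b"
    and N: "N \<in> null_sets lborel"
    and fd: "\<And>t. t \<in> {p<..<q} \<Longrightarrow> t \<notin> N \<Longrightarrow> (f has_real_derivative \<phi> t) (at t)"
    and \<Phi>d: "\<And>t. t \<in> {p<..<q} \<Longrightarrow> (\<Phi> has_real_derivative \<phi> t) (at t)"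
    and lip: "\<And>x y. x \<in> {p..q} \<Longrightarrow> y \<in> {p..q} \<Longrightarrow> \<bar>\<Phi> x - \<Phi> y\<bar> \<le> M * \<bar>x - y\<bar>"
    and M: "M \<ge> 0" and e: "\<epsilon> > 0"
  shows "\<bar>(f q - \<Phi> q) - (f p - \<Phi> p)\<bar> \<le> \<epsilon> * (q - p + 2)"
proof -
  define D where "D t = f t - \<Phi> t" for t
  obtain \<delta>1 where \<delta>1: "\<delta>1 > 0" and acH: "\<And>S. finite S \<Longrightarrow> (\<forall>x\<in>S. a \<le> fst x \<and> fst x \<le> snd x \<and> snd x \<le> b) \<Longrightarrow>
      (\<forall>x\<in>S. \<forall>y\<in>S. x \<noteq> y \<longrightarrow> {fst x<..<snd x} \<inter> {fst y<..<snd y} = {}) \<Longrightarrow>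
      (\<Sum>x\<in>S. snd x - fst x) < \<delta>1 \<Longrightarrow> (\<Sum>x\<in>S. \<bar>f (snd x) - f (fst x)\<bar>) < \<epsilon>"
    using ac_unordered[OF ac e] by blast
  define \<delta> where "\<delta> = min \<delta>1 (\<epsilon> / (M + 1))"
  have \<delta>0: "\<delta> > 0" using \<delta>1 e M by (simp add: \<delta>_def)
  have M\<delta>: "M * \<delta> \<le> \<epsilon>"
  proof -
    have "M * \<delta> \<le> M * (\<epsilon> / (M + 1))" using M by (intro mult_left_mono) (auto simp: \<delta>_def)
    also have "\<dots> \<le> \<epsilon>" using M e by (simp add: field_simps)
    finally show ?thesis .
  qed
  define N' where "N' = N \<union> {p, q}"
  have "{p, q} \<in> null_sets lborel" by (simp add: finite_imp_null_set_lborel)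
  hence N'null: "N' \<in> null_sets lborel" unfolding N'_def by (rule null_sets.Un[OF N])
  hence N'leb: "N' \<in> null_sets lebesgue" by (rule null_sets_completionI)
  hence "N' \<in> sets lebesgue" by auto
  then obtain T where T: "open T" "N' \<subseteq> T" "T - N' \<in> lmeasurable"
      "emeasure lebesgue (T - N') < ennreal \<delta>"
    using sets_lebesgue_outer_open \<delta>0 by metis
  have mT: "measure lebesgue (T - N') < \<delta>"
    using T(3,4) \<delta>0 by (simp add: emeasure_eq_measure2 ennreal_less_iff)
  have ex: "\<exists>r>0. (x \<in> N' \<longrightarrow> ball x r \<subseteq> T) \<and>
      (x \<in> {p<..<q} \<and> x \<notin> N' \<longrightarrow> (\<forall>y. \<bar>y - x\<bar> < r \<longrightarrow> \<bar>D y - D x\<bar> \<le> \<epsilon> * \<bar>y - x\<bar>))" for x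
  proof (cases "x \<in> N'")
    case True
    then obtain r where "r > 0" "ball x r \<subseteq> T" using T(1,2) open_contains_ball by blast
    thus ?thesis using True by blast
  next
    case False
    show ?thesis
    proof (cases "x \<in> {p<..<q}")
      case True
      have xN: "x \<notin> N" using False by (simp add: N'_def)
      have "(D has_real_derivative (\<phi> x - \<phi> x)) (at x)"
        unfolding D_def by (intro DERIV_diff fd \<Phi>d True xN)
      hence "(D has_derivative (*) 0) (at x)" by (simp add: has_field_derivative_def)
      hence "\<exists>d>0. \<forall>y\<in>UNIV. norm (y - x) < d \<longrightarrow> norm (D y - D x - 0 * (y - x)) \<le> \<epsilon> * norm (y - x)"
        using e unfolding has_derivative_within_alt by blast
      then obtain d where "d > 0" "\<And>y. \<bar>y - x\<bar> < d \<Longrightarrow> \<bar>D y - D x\<bar> \<le> \<epsilon> * \<bar>y - x\<bar>" by auto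
      thus ?thesis using False by blast
    next
      case False2: False
      show ?thesis using False False2 by (intro exI[of _ 1]) auto
    qed
  qed
  then obtain \<rho> where \<rho>: "\<And>x. \<rho> x > 0" "\<And>x. x \<in> N' \<Longrightarrow> ball x (\<rho> x) \<subseteq> T"
    "\<And>x y. x \<in> {p<..<q} \<Longrightarrow> x \<notin> N' \<Longrightarrow> \<bar>y - x\<bar> < \<rho> x \<Longrightarrow> \<bar>D y - D x\<bar> \<le> \<epsilon> * \<bar>y - x\<bar>"
    by metis
  have "gauge (\<lambda>x. ball x (\<rho> x))" using \<rho>(1) by (intro gauge_ball_dependent) auto
  then obtain P where P: "P tagged_division_of {p..q}" "(\<lambda>x. ball x (\<rho> x)) fine P"
    using fine_division_exists_real by blast
  note PD = tagged_division_ofD[OF P(1)]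
  have finP: "finite P" using PD(1) .
  have fine: "(x,K) \<in> P \<Longrightarrow> K \<subseteq> ball x (\<rho> x)" for x K using P(2) by (auto simp: fine_def)
  define g where "g xk = D (Sup (snd xk)) - D (Inf (snd xk))" for xk :: "real \<times> real set"
  have sum_all: "(\<Sum>xk\<in>P. g xk) = D q - D p"
    using additive_tagged_division_1[OF pq P(1), of D] by (simp add: g_def case_prod_unfold)
  define P1 where "P1 = {xk \<in> P. fst xk \<in> N'}"
  define P2 where "P2 = P - P1"
  have P1P: "P1 \<subseteq> P" by (auto simp: P1_def)
  have finP1: "finite P1" using finP P1P finite_subset by blast
  have split: "(\<Sum>xk\<in>P. g xk) = (\<Sum>xk\<in>P2. g xk) + (\<Sum>xk\<in>P1. g xk)"
    unfolding P2_def by (rule sum.subset_diff[OF P1P finP])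
  have contP: "(\<Sum>xk\<in>P. measure lborel (snd xk)) = q - p"
    using additive_content_tagged_division[of P p q] P(1) pq by (simp add: case_prod_unfold)
  have bP2: "\<bar>g xk\<bar> \<le> \<epsilon> * measure lborel (snd xk)" if "xk \<in> P2" for xk
  proof -
    obtain x K where xk: "xk = (x,K)" by (cases xk)
    have inP: "(x,K) \<in> P" and xN': "x \<notin> N'" using that xk by (auto simp: P2_def P1_def)
    obtain c d where K: "K = {c..d}" "c \<le> x" "x \<le> d" "p \<le> c" "d \<le> q"
      using tagged_interval_real[OF P(1) inP] by blast
    have xpq: "x \<in> {p<..<q}" using K xN' by (auto simp: N'_def)
    have "c \<in> {c..d}" "d \<in> {c..d}" using K by auto
    hence "c \<in> ball x (\<rho> x)" "d \<in> ball x (\<rho> x)" using fine[OF inP] K by (auto simp del: mem_ball)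
    hence "\<bar>c - x\<bar> < \<rho> x" "\<bar>d - x\<bar> < \<rho> x" by (auto simp: dist_real_def abs_minus_commute)
    hence "\<bar>D c - D x\<bar> \<le> \<epsilon> * \<bar>c - x\<bar>" "\<bar>D d - D x\<bar> \<le> \<epsilon> * \<bar>d - x\<bar>"
      using \<rho>(3)[OF xpq xN'] by auto
    moreover have "\<bar>c - x\<bar> = x - c" "\<bar>d - x\<bar> = d - x" using K by auto
    moreover have "\<bar>D d - D c\<bar> \<le> \<bar>D d - D x\<bar> + \<bar>D c - D x\<bar>" by arith
    ultimately have "\<bar>D d - D c\<bar> \<le> \<epsilon> * (x - c) + \<epsilon> * (d - x)" by (smt (verit))
    also have "\<dots> = \<epsilon> * (d - c)" by (simp add: algebra_simps)
    finally show ?thesis using K xk by (simp add: g_def)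
  qed
  have sP2: "\<bar>\<Sum>xk\<in>P2. g xk\<bar> \<le> \<epsilon> * (q - p)"
  proof -
    have "\<bar>\<Sum>xk\<in>P2. g xk\<bar> \<le> (\<Sum>xk\<in>P2. \<bar>g xk\<bar>)" by (rule sum_abs)
    also have "\<dots> \<le> (\<Sum>xk\<in>P2. \<epsilon> * measure lborel (snd xk))" by (rule sum_mono) (rule bP2)
    also have "\<dots> \<le> (\<Sum>xk\<in>P. \<epsilon> * measure lborel (snd xk))"
      by (rule sum_mono2[OF finP]) (use e in \<open>auto simp: P2_def\<close>)
    also have "\<dots> = \<epsilon> * (q - p)" using contP by (simp add: sum_distrib_left[symmetric])
    finally show ?thesis .
  qed
  have P1iv: "\<exists>c d. snd xk = {c..d} \<and> c \<le> d \<and> p \<le> c \<and> d \<le> q \<and> fst xk \<in> N' \<and> xk \<in> P" if "xk \<in> P1" for xk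
  proof -
    obtain x K where xk: "xk = (x,K)" by (cases xk)
    have inP: "(x,K) \<in> P" using that xk by (auto simp: P1_def)
    obtain c d where K: "K = {c..d}" "c \<le> x" "x \<le> d" "p \<le> c" "d \<le> q"
      using tagged_interval_real[OF P(1) inP] by blast
    thus ?thesis using xk that by (auto simp: P1_def)
  qed
  define h where "h xk = (Inf (snd xk), Sup (snd xk))" for xk :: "real \<times> real set"
  define S where "S = h ` P1"
  have coll: "Inf (snd xk) = Sup (snd xk)" if H: "xk \<in> P1" "yk \<in> P1" "xk \<noteq> yk" "h xk = h yk" for xk yk
  proof -
    obtain c d where cd: "snd xk = {c..d}" "c \<le> d" "xk \<in> P" using P1iv[OF H(1)] by blast
    obtain c' d' where cd': "snd yk = {c'..d'}" "c' \<le> d'" "yk \<in> P" using P1iv[OF H(2)] by blast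
    have "c = c'" "d = d'" using H(4) cd cd' by (auto simp: h_def)
    hence "snd xk = snd yk" using cd cd' by simp
    have "interior (snd xk) \<inter> interior (snd yk) = {}"
      using PD(5)[of "fst xk" "snd xk" "fst yk" "snd yk"] cd(3) cd'(3) H(3) by auto
    hence "interior (snd xk) = {}" using \<open>snd xk = snd yk\<close> by simp
    hence "\<not> c < d" using cd(1) by simp
    hence "c = d" using cd(2) by linarith
    thus ?thesis using cd by simp
  qed
  have disS: "\<forall>s1\<in>S. \<forall>s2\<in>S. s1 \<noteq> s2 \<longrightarrow> {fst s1<..<snd s1} \<inter> {fst s2<..<snd s2} = {}"
  proof (intro ballI impI)
    fix s1 s2 assume "s1 \<in> S" "s2 \<in> S" "s1 \<noteq> s2"
    then obtain xk yk where xy: "xk \<in> P1" "yk \<in> P1" "s1 = h xk" "s2 = h yk" by (auto simp: S_def)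
    hence "xk \<noteq> yk" using \<open>s1 \<noteq> s2\<close> by auto
    obtain c d where cd: "snd xk = {c..d}" "c \<le> d" "xk \<in> P" using P1iv[OF xy(1)] by blast
    obtain c' d' where cd': "snd yk = {c'..d'}" "c' \<le> d'" "yk \<in> P" using P1iv[OF xy(2)] by blast
    have "interior (snd xk) \<inter> interior (snd yk) = {}"
      using PD(5)[of "fst xk" "snd xk" "fst yk" "snd yk"] cd(3) cd'(3) \<open>xk \<noteq> yk\<close> by auto
    thus "{fst s1<..<snd s1} \<inter> {fst s2<..<snd s2} = {}" using xy cd cd' by (simp add: h_def)
  qed
  have bndS: "\<forall>s\<in>S. a \<le> fst s \<and> fst s \<le> snd s \<and> snd s \<le> b"
  proof
    fix s assume "s \<in> S"
    then obtain xk where "xk \<in> P1" "s = h xk" by (auto simp: S_def)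
    then obtain c d where "snd xk = {c..d}" "c \<le> d" "p \<le> c" "d \<le> q" "s = h xk" using P1iv by blast
    thus "a \<le> fst s \<and> fst s \<le> snd s \<and> snd s \<le> b" using ap qb by (simp add: h_def)
  qed
  have finS: "finite S" using finP1 by (simp add: S_def)
  have sum1: "(\<Sum>s\<in>S. \<bar>f (snd s) - f (fst s)\<bar>) = (\<Sum>xk\<in>P1. \<bar>f (Sup (snd xk)) - f (Inf (snd xk))\<bar>)"
    unfolding S_def by (subst sum.reindex_nontrivial[OF finP1]) (auto simp: h_def dest: coll)
  have sum2: "(\<Sum>s\<in>S. snd s - fst s) = (\<Sum>xk\<in>P1. measure lborel (snd xk))"
  proof -
    have "(\<Sum>s\<in>S. snd s - fst s) = (\<Sum>xk\<in>P1. Sup (snd xk) - Inf (snd xk))"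
      unfolding S_def by (subst sum.reindex_nontrivial[OF finP1]) (auto simp: h_def dest: coll)
    also have "\<dots> = (\<Sum>xk\<in>P1. measure lborel (snd xk))"
    proof (rule sum.cong[OF refl])
      fix xk assume "xk \<in> P1"
      then obtain c d where "snd xk = {c..d}" "c \<le> d" using P1iv by blast
      thus "Sup (snd xk) - Inf (snd xk) = measure lborel (snd xk)" by simp
    qed
    finally show ?thesis .
  qed
  have sum3: "(\<Sum>xk\<in>P1. measure lborel (snd xk)) < \<delta>"
  proof -
    define D1 where "D1 = snd ` P1"
    have c0: "measure lborel (snd xk) = 0" if H: "xk \<in> P1" "yk \<in> P1" "xk \<noteq> yk" "snd xk = snd yk" for xk yk
    proof -
      obtain c d where cd: "snd xk = {c..d}" "c \<le> d" "xk \<in> P" using P1iv[OF H(1)] by blast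
      have "h xk = h yk" using H(4) by (simp add: h_def)
      hence "Inf (snd xk) = Sup (snd xk)" using coll H by blast
      thus ?thesis using cd by simp
    qed
    have e1: "(\<Sum>xk\<in>P1. measure lborel (snd xk)) = (\<Sum>K\<in>D1. measure lborel K)"
      unfolding D1_def by (subst sum.reindex_nontrivial[OF finP1]) (auto dest: c0)
    have divP: "(snd ` P) division_of \<Union>(snd ` P)"
      using division_of_tagged_division[OF P(1)] division_ofD(6) by metis
    have div1: "D1 division_of \<Union>D1"
      by (rule division_of_subset[OF divP]) (auto simp: D1_def P1_def)
    have e2: "(\<Sum>K\<in>D1. measure lborel K) = (\<Sum>K\<in>D1. measure lebesgue K)"
    proof (rule sum.cong[OF refl])
      fix K assume "K \<in> D1"
      then obtain a' b' where "K = cbox a' b'" using division_ofD(4)[OF div1] by blast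
      thus "measure lborel K = measure lebesgue K" by simp
    qed
    have e3: "(\<Sum>K\<in>D1. measure lebesgue K) = measure lebesgue (\<Union>D1)"
      by (rule content_division[OF div1])
    have lm: "\<Union>D1 \<in> lmeasurable" by (rule lmeasurable_division[OF div1])
    have subT: "\<Union>D1 \<subseteq> T"
    proof
      fix y assume "y \<in> \<Union>D1"
      then obtain xk where "xk \<in> P1" "y \<in> snd xk" by (auto simp: D1_def)
      hence "fst xk \<in> N'" "(fst xk, snd xk) \<in> P" by (auto simp: P1_def)
      thus "y \<in> T" using fine[of "fst xk" "snd xk"] \<rho>(2)[of "fst xk"] \<open>y \<in> snd xk\<close> by blast
    qed
    have "measure lebesgue (\<Union>D1) = measure lebesgue (\<Union>D1 - N')"
      using measure_Diff_null_set[OF _ N'leb, of "\<Union>D1"] lm by auto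
    also have "\<dots> \<le> measure lebesgue (T - N')"
      using subT lm T(3) \<open>N' \<in> sets lebesgue\<close> by (intro measure_mono_fmeasurable) auto
    finally show ?thesis using e1 e2 e3 mT by linarith
  qed
  have sP1a: "(\<Sum>xk\<in>P1. \<bar>f (Sup (snd xk)) - f (Inf (snd xk))\<bar>) < \<epsilon>"
    using acH[OF finS bndS disS] sum1 sum2 sum3 \<delta>_def by linarith
  have bP1: "\<bar>g xk\<bar> \<le> \<bar>f (Sup (snd xk)) - f (Inf (snd xk))\<bar> + M * measure lborel (snd xk)" if H: "xk \<in> P1" for xk
  proof -
    obtain c d where cd: "snd xk = {c..d}" "c \<le> d" "p \<le> c" "d \<le> q" using P1iv[OF H] by blast
    have "\<bar>\<Phi> d - \<Phi> c\<bar> \<le> M * \<bar>d - c\<bar>" using lip[of d c] cd pq by auto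
    hence "\<bar>g xk\<bar> \<le> \<bar>f d - f c\<bar> + M * (d - c)" using cd unfolding g_def D_def by simp
    thus ?thesis using cd by simp
  qed
  have sP1: "\<bar>\<Sum>xk\<in>P1. g xk\<bar> \<le> 2 * \<epsilon>"
  proof -
    have "\<bar>\<Sum>xk\<in>P1. g xk\<bar> \<le> (\<Sum>xk\<in>P1. \<bar>g xk\<bar>)" by (rule sum_abs)
    also have "\<dots> \<le> (\<Sum>xk\<in>P1. \<bar>f (Sup (snd xk)) - f (Inf (snd xk))\<bar> + M * measure lborel (snd xk))"
      by (rule sum_mono) (rule bP1)
    also have "\<dots> = (\<Sum>xk\<in>P1. \<bar>f (Sup (snd xk)) - f (Inf (snd xk))\<bar>) + M * (\<Sum>xk\<in>P1. measure lborel (snd xk))"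
      by (simp add: sum.distrib sum_distrib_left)
    also have "\<dots> \<le> \<epsilon> + M * \<delta>"
      using sP1a sum3 M by (intro add_mono mult_left_mono) auto
    also have "\<dots> \<le> 2 * \<epsilon>" using M\<delta> by simp
    finally show ?thesis .
  qed
  have "D q - D p = (\<Sum>xk\<in>P2. g xk) + (\<Sum>xk\<in>P1. g xk)" using sum_all split by simp
  hence "\<bar>D q - D p\<bar> \<le> \<epsilon> * (q - p) + 2 * \<epsilon>" using sP1 sP2 by linarith
  thus ?thesis by (simp add: D_def algebra_simps)
qed

lemma ac_ftc:
  fixes f \<Phi> \<phi> :: "real \<Rightarrow> real"
  assumes pq: "p \<le> q" and ac: "abs_cont_on a b f" and ap: "a \<le> p" and qb: "q \<le> b"
    and N: "N \<in> null_sets lborel"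
    and fd: "\<And>t. t \<in> {p<..<q} \<Longrightarrow> t \<notin> N \<Longrightarrow> (f has_real_derivative \<phi> t) (at t)"
    and \<Phi>d: "\<And>t. t \<in> {p<..<q} \<Longrightarrow> (\<Phi> has_real_derivative \<phi> t) (at t)"
    and lip: "\<And>x y. x \<in> {p..q} \<Longrightarrow> y \<in> {p..q} \<Longrightarrow> \<bar>\<Phi> x - \<Phi> y\<bar> \<le> M * \<bar>x - y\<bar>"
    and M: "M \<ge> 0"
  shows "f q - f p = \<Phi> q - \<Phi> p"
proof (rule ccontr)
  let ?z = "\<bar>(f q - \<Phi> q) - (f p - \<Phi> p)\<bar>"
  assume "f q - f p \<noteq> \<Phi> q - \<Phi> p"
  hence z: "?z > 0" by auto
  define \<epsilon> where "\<epsilon> = ?z / (2 * (q - p + 2))"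
  have e: "\<epsilon> > 0" using z pq by (simp add: \<epsilon>_def)
  have "?z \<le> \<epsilon> * (q - p + 2)"
    by (rule ac_ftc_le[OF pq ac ap qb N fd \<Phi>d lip M e]) auto
  also have "\<dots> = ?z / 2" using pq by (simp add: \<epsilon>_def field_simps)
  finally show False using z by simp
qed


lemma gnl_bounds: "0 < s \<Longrightarrow> s < 1 \<Longrightarrow> 0 < gnl s \<and> gnl s \<le> 1"
proof -
  assume s: "0 < s" "s < 1"
  have a: "s^2 \<le> 1" using s by (simp add: power_le_one)
  have b: "0 < s^2" using s by simp
  have c: "0 < 1 - s" "1 - s \<le> 1" using s by auto
  have "0 < s^2 * (1 - s)" using b c by simp
  moreover have "s^2 * (1 - s) \<le> 1" using a b c mult_le_one[of "s^2" "1 - s"] by simp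
  ultimately show ?thesis unfolding gnl_def by simp
qed

lemma piece_deriv:
  fixes u u' :: "real \<Rightarrow> real"
  assumes ud: "\<forall>t\<in>{0..1}. (u has_real_derivative u' t) (at t within {0..1})"
    and ac: "abs_cont_on 0 1 u'"
    and rng: "\<forall>t\<in>{0..1}. 0 < u t \<and> u t < 1"
    and N: "N \<in> null_sets lborel"
    and Nd: "\<And>t. t \<in> {0<..<1} \<Longrightarrow> t \<notin> N \<Longrightarrow> (u' has_real_derivative - (A t * gnl (u t))) (at t)"
    and pq: "0 \<le> p" "p \<le> q" "q \<le> 1" and Ac: "\<And>t. t \<in> {p<..<q} \<Longrightarrow> A t = c"
  shows "\<And>t. t \<in> {p<..<q} \<Longrightarrow> (u' has_real_derivative - (c * gnl (u t))) (at t)"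
proof -
  have ucont: "continuous_on {0..1} u" using ud by (intro DERIV_continuous_on) auto
  define \<psi> where "\<psi> t = - (c * gnl (u t))" for t
  have psic: "continuous_on {p..q} \<psi>"
  proof -
    have "continuous_on {p..q} u" by (rule continuous_on_subset[OF ucont]) (use pq in auto)
    thus ?thesis unfolding \<psi>_def gnl_def by (intro continuous_intros)
  qed
  have psib: "\<bar>\<psi> t\<bar> \<le> \<bar>c\<bar>" if "t \<in> {p..q}" for t
  proof -
    have "0 < u t" "u t < 1" using rng that pq by auto
    hence "0 < gnl (u t)" "gnl (u t) \<le> 1" using gnl_bounds by auto
    thus ?thesis unfolding \<psi>_def by (simp add: abs_mult mult_left_le)
  qed
  define \<Phi> where "\<Phi> t = integral {p..t} \<psi>" for t
  have \<Phi>w: "(\<Phi> has_real_derivative \<psi> t) (at t within {p..q})" if "t \<in> {p..q}" for t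
    unfolding \<Phi>_def by (rule integral_has_real_derivative[OF psic that])
  have \<Phi>lip: "\<bar>\<Phi> x - \<Phi> y\<bar> \<le> \<bar>c\<bar> * \<bar>x - y\<bar>" if "x \<in> {p..q}" "y \<in> {p..q}" for x y
  proof -
    have "norm (\<Phi> x - \<Phi> y) \<le> \<bar>c\<bar> * norm (x - y)"
      by (rule field_differentiable_bound[of "{p..q}" \<Phi> \<psi>]) (use \<Phi>w psib that in auto)
    thus ?thesis by simp
  qed
  have \<Phi>d: "(\<Phi> has_real_derivative \<psi> t) (at t)" if "t \<in> {p<..<q}" for t
    using \<Phi>w[of t] that by (simp add: at_within_Icc_at)
  have eq: "u' t = u' p + \<Phi> t" if "t \<in> {p..q}" for t
  proof -
    have "u' t - u' p = \<Phi> t - \<Phi> p"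
    proof (rule ac_ftc[of p t 0 1 u' N \<psi> \<Phi> "\<bar>c\<bar>"])
      show "p \<le> t" "0 \<le> p" "t \<le> 1" using that pq by auto
      show "abs_cont_on 0 1 u'" by (rule ac)
      show "N \<in> null_sets lborel" by (rule N)
      fix s assume s: "s \<in> {p<..<t}"
      hence s': "s \<in> {p<..<q}" using that by auto
      hence "s \<in> {0<..<1}" using pq by auto
      thus "s \<notin> N \<Longrightarrow> (u' has_real_derivative \<psi> s) (at s)"
        using Nd[of s] Ac[OF s'] by (simp add: \<psi>_def)
      show "(\<Phi> has_real_derivative \<psi> s) (at s)" using \<Phi>d[OF s'] .
    next
      fix x y assume "x \<in> {p..t}" "y \<in> {p..t}"
      thus "\<bar>\<Phi> x - \<Phi> y\<bar> \<le> \<bar>c\<bar> * \<bar>x - y\<bar>" using \<Phi>lip that by auto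
    qed simp
    moreover have "\<Phi> p = 0" by (simp add: \<Phi>_def)
    ultimately show ?thesis by simp
  qed
  fix t assume t: "t \<in> {p<..<q}"
  have "((\<lambda>s. u' p + \<Phi> s) has_real_derivative 0 + \<psi> t) (at t)"
    by (rule DERIV_add[OF DERIV_const \<Phi>d[OF t]])
  hence "((\<lambda>s. u' p + \<Phi> s) has_real_derivative \<psi> t) (at t)" by simp
  hence "(u' has_real_derivative \<psi> t) (at t)"
  proof (rule has_field_derivative_transform_within_open[of _ _ _ "{p<..<q}"])
    fix x assume "x \<in> {p<..<q}"
    hence "x \<in> {p..q}" by auto
    from eq[OF this] show "u' p + \<Phi> x = u' x" by linarith
  qed (use t in auto)
  thus "(u' has_real_derivative - (c * gnl (u t))) (at t)" by (simp add: \<psi>_def)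
qed


lemma barrier:
  fixes h h' :: "real \<Rightarrow> real"
  assumes ab: "a \<le> b" and hc: "continuous_on {a..b} h" and ha: "h a \<ge> 0" and c: "c > 0"
    and hd: "\<And>t. t \<in> {a<..<b} \<Longrightarrow> -c < h t \<Longrightarrow> h t < 0 \<Longrightarrow>
               (h has_real_derivative h' t) (at t) \<and> h' t \<ge> 0"
  shows "\<forall>t\<in>{a..b}. h t \<ge> 0"
proof (rule ccontr)
  assume "\<not> ?thesis"
  then obtain t1 where t1: "t1 \<in> {a..b}" "h t1 < 0" by force
  define Z where "Z = {a..t1} \<inter> h -` {0..}"
  have hc1: "continuous_on {a..t1} h" by (rule continuous_on_subset[OF hc]) (use t1 in auto)
  have cZ: "closed Z" unfolding Z_def by (rule continuous_closed_preimage[OF hc1]) auto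
  have aZ: "a \<in> Z" using ha t1 by (auto simp: Z_def)
  have bZ: "bdd_above Z" by (rule bdd_aboveI[of _ t1]) (auto simp: Z_def)
  define s0 where "s0 = Sup Z"
  have s0Z: "s0 \<in> Z" unfolding s0_def using closed_contains_Sup[OF _ bZ cZ] aZ by blast
  have s0: "a \<le> s0" "s0 \<le> t1" "h s0 \<ge> 0" using s0Z by (auto simp: Z_def)
  have s0t1: "s0 < t1" using s0 t1 by (cases "s0 = t1") auto
  have neg: "h s < 0" if "s0 < s" "s \<le> t1" for s
  proof (rule ccontr)
    assume "\<not> h s < 0"
    hence "s \<in> Z" using that s0 by (auto simp: Z_def)
    hence "s \<le> s0" unfolding s0_def using bZ by (rule cSup_upper)
    thus False using that by simp
  qed
  have "continuous (at s0 within {a..b}) h"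
    using hc s0 t1 by (simp add: continuous_on_eq_continuous_within)
  then obtain d where d: "d > 0" "\<And>s. s \<in> {a..b} \<Longrightarrow> dist s s0 < d \<Longrightarrow> dist (h s) (h s0) < c"
    using c unfolding continuous_within_eps_delta by blast
  define t2 where "t2 = min t1 (s0 + d/2)"
  have t2: "s0 < t2" "t2 \<le> t1" using s0t1 d by (auto simp: t2_def)
  have hgt: "h s > -c" if "s0 \<le> s" "s \<le> t2" for s
  proof -
    have "s \<in> {a..b}" using that s0 t2 t1 by auto
    moreover have "dist s s0 < d" using that d t2 by (auto simp: dist_real_def t2_def)
    ultimately have "dist (h s) (h s0) < c" by (rule d(2))
    thus ?thesis using s0 by (auto simp: dist_real_def)
  qed
  have "h s0 \<le> h t2"
  proof (rule DERIV_nonneg_imp_increasing_open[of s0 t2 h])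
    show "s0 \<le> t2" using t2 by simp
    show "continuous_on {s0..t2} h" by (rule continuous_on_subset[OF hc]) (use s0 t2 t1 in auto)
    fix x assume x: "s0 < x" "x < t2"
    have "x \<in> {a<..<b}" using x s0 t2 t1 by auto
    moreover have "-c < h x" using hgt[of x] x by auto
    moreover have "h x < 0" using neg[of x] x t2 by auto
    ultimately show "\<exists>y. (h has_real_derivative y) (at x) \<and> y \<ge> 0" using hd by blast
  qed
  moreover have "h t2 < 0" using neg[of t2] t2 by auto
  ultimately show False using s0 by linarith
qed

lemma gprime_bounds:
  fixes s :: real
  assumes "0 < s" "s < 1"
  shows "-1 \<le> 2 * s - 3 * s^2" "2 * s - 3 * s^2 \<le> 1/3"
proof -
  have "(3 * s + 1) * (s - 1) \<le> 0" using assms by (intro mult_nonneg_nonpos) auto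
  thus "-1 \<le> 2 * s - 3 * s^2" by (simp add: algebra_simps power2_eq_square)
  have "0 \<le> 3 * (s - 1/3)^2" by simp
  thus "2 * s - 3 * s^2 \<le> 1/3" by (simp add: algebra_simps power2_eq_square)
qed

lemma riccati:
  fixes v v' :: "real \<Rightarrow> real"
  assumes vd: "(v has_real_derivative v' t) (at t)"
    and v'd: "(v' has_real_derivative - (c * gnl (v t))) (at t)"
    and r: "0 < v t" "v t < 1"
  shows "((\<lambda>s. - v' s / gnl (v s)) has_real_derivative
           (c + (2 * v t - 3 * (v t)^2) * (- v' t / gnl (v t))^2)) (at t)"
proof -
  have g0: "gnl (v t) \<noteq> 0" using gnl_bounds[OF r] by simp
  have gd: "((\<lambda>s. gnl (v s)) has_real_derivative (2 * v t - 3 * (v t)^2) * v' t) (at t)"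
  proof -
    have d1: "((\<lambda>s. v s * v s) has_real_derivative v' t * v t + v' t * v t) (at t)"
      by (rule DERIV_mult[OF vd vd])
    have d2: "((\<lambda>s. 1 - v s) has_real_derivative 0 - v' t) (at t)"
      by (rule DERIV_diff[OF DERIV_const vd])
    have "((\<lambda>s. v s * v s * (1 - v s)) has_real_derivative
        (v' t * v t + v' t * v t) * (1 - v t) + (0 - v' t) * (v t * v t)) (at t)"
      by (rule DERIV_mult[OF d1 d2])
    thus ?thesis unfolding gnl_def by (simp add: algebra_simps power2_eq_square)
  qed
  have nd: "((\<lambda>s. - v' s) has_real_derivative c * gnl (v t)) (at t)"
    using DERIV_minus[OF v'd] by simp
  have "((\<lambda>s. - v' s / gnl (v s)) has_real_derivative
        (c * gnl (v t) * gnl (v t) - (- v' t) * ((2 * v t - 3 * (v t)^2) * v' t)) / (gnl (v t) * gnl (v t))) (at t)"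
    by (rule DERIV_divide[OF nd gd g0])
  moreover have "(c * gnl (v t) * gnl (v t) - (- v' t) * ((2 * v t - 3 * (v t)^2) * v' t)) / (gnl (v t) * gnl (v t))
      = c + (2 * v t - 3 * (v t)^2) * (- v' t / gnl (v t))^2"
    using g0 by (simp add: field_simps power2_eq_square)
  ultimately show ?thesis by simp
qed


lemma gz_bounds:
  fixes s Z :: real
  assumes "0 < s" "s < 1"
  shows "- (Z^2) \<le> (2 * s - 3 * s^2) * Z^2" "(2 * s - 3 * s^2) * Z^2 \<le> Z^2 / 3"
proof -
  have Z: "0 \<le> Z^2" by simp
  show "- (Z^2) \<le> (2 * s - 3 * s^2) * Z^2"
    using mult_right_mono[OF gprime_bounds(1)[OF assms] Z] by simp
  show "(2 * s - 3 * s^2) * Z^2 \<le> Z^2 / 3"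
    using mult_right_mono[OF gprime_bounds(2)[OF assms] Z] by simp
qed

lemma zcont:
  fixes v v' :: "real \<Rightarrow> real"
  assumes "continuous_on {p..q} v" "continuous_on {p..q} v'" "\<And>t. t \<in> {p..q} \<Longrightarrow> 0 < v t \<and> v t < 1"
  shows "continuous_on {p..q} (\<lambda>s. - v' s / gnl (v s))"
proof -
  have "continuous_on {p..q} (\<lambda>s. gnl (v s))" unfolding gnl_def using assms(1) by (intro continuous_intros)
  moreover have "\<forall>s\<in>{p..q}. gnl (v s) \<noteq> 0" using assms(3) gnl_bounds by force
  ultimately show ?thesis using assms(2) by (intro continuous_intros) auto
qed

lemma left_piece_lower:
  fixes v v' :: "real \<Rightarrow> real"
  assumes \<sigma>: "0 < \<sigma>" "\<sigma> \<le> 1" and lam: "lam > 0"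
    and vc: "continuous_on {0..\<sigma>} v" and v'c: "continuous_on {0..\<sigma>} v'"
    and vd: "\<And>t. t \<in> {0<..<\<sigma>} \<Longrightarrow> (v has_real_derivative v' t) (at t)"
    and v'd: "\<And>t. t \<in> {0<..<\<sigma>} \<Longrightarrow> (v' has_real_derivative - (lam * gnl (v t))) (at t)"
    and r: "\<And>t. t \<in> {0..\<sigma>} \<Longrightarrow> 0 < v t \<and> v t < 1"
    and v0: "v' 0 = 0"
    and s: "0 < s" "s \<le> lam * \<sigma> / 2" "s \<le> 1/2"
  shows "- v' \<sigma> / gnl (v \<sigma>) \<ge> s"
proof -
  define z where "z t = - v' t / gnl (v t)" for t
  have zc: "continuous_on {0..\<sigma>} z" unfolding z_def by (rule zcont[OF vc v'c r])
  have vneg: "v' t < 0" if "t \<in> {0<..<\<sigma>}" for t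
  proof -
    have "v' 0 > v' t"
    proof (rule DERIV_neg_imp_decreasing_open[of 0 t v'])
      show "0 < t" using that by auto
      show "continuous_on {0..t} v'" by (rule continuous_on_subset[OF v'c]) (use that in auto)
      fix x assume x: "0 < x" "x < t"
      hence xi: "x \<in> {0<..<\<sigma>}" using that by auto
      have "0 < gnl (v x)" using r[of x] xi gnl_bounds by auto
      hence "- (lam * gnl (v x)) < 0" using lam by simp
      thus "\<exists>y. (v' has_real_derivative y) (at x) \<and> y < 0" using v'd[OF xi] by blast
    qed
    thus ?thesis using v0 by simp
  qed
  have zpos: "z t > 0" if "t \<in> {0<..<\<sigma>}" for t
  proof -
    have "0 < gnl (v t)" using r[of t] that gnl_bounds by auto
    thus ?thesis using vneg[OF that] by (simp add: z_def divide_neg_pos)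
  qed
  define h where "h t = z t - s * t / \<sigma>" for t
  define h' where "h' t = (lam + (2 * v t - 3 * (v t)^2) * (z t)^2) - s / \<sigma>" for t
  have "\<forall>t\<in>{0..\<sigma>}. h t \<ge> 0"
  proof (rule barrier[of 0 \<sigma> h 1 h'])
    show "0 \<le> \<sigma>" using \<sigma> by simp
    show "continuous_on {0..\<sigma>} h" unfolding h_def using zc \<sigma> by (intro continuous_intros) auto
    show "h 0 \<ge> 0" using v0 by (simp add: h_def z_def)
    show "(0::real) < 1" by simp
    fix t assume t: "t \<in> {0<..<\<sigma>}" "-1 < h t" "h t < 0"
    have rt: "0 < v t" "v t < 1" using r[of t] t by auto
    have zd: "(z has_real_derivative lam + (2 * v t - 3 * (v t)^2) * (z t)^2) (at t)"
      unfolding z_def by (rule riccati[OF vd[OF t(1)] v'd[OF t(1)] rt])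
    have "((\<lambda>x. s * x / \<sigma>) has_real_derivative s * 1 / \<sigma>) (at t)"
      by (intro DERIV_cdivide DERIV_cmult DERIV_ident)
    hence hd: "(h has_real_derivative h' t) (at t)"
      unfolding h_def h'_def using DERIV_diff[OF zd] by simp
    have z1: "0 < z t" using zpos[OF t(1)] .
    have z2: "z t < s" 
    proof -
      have "s * t / \<sigma> \<le> s" using t s \<sigma> by (simp add: field_simps mult_left_le)
      thus ?thesis using t(3) by (simp add: h_def)
    qed
    have zz: "(z t)^2 \<le> s^2" using z1 z2 by (intro power_mono) auto
    have ss: "s^2 \<le> lam * \<sigma> / 4"
    proof -
      have "s * s \<le> (lam * \<sigma> / 2) * (1/2)" using s by (intro mult_mono) auto
      thus ?thesis by (simp add: power2_eq_square)
    qed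
    have sd: "s / \<sigma> \<le> lam / 2" using s \<sigma> by (simp add: field_simps)
    have "lam * \<sigma> / 4 \<le> lam / 4" using lam \<sigma> by simp
    hence "h' t \<ge> 0" using gz_bounds(1)[OF rt, of "z t"] zz ss sd lam unfolding h'_def by linarith
    thus "(h has_real_derivative h' t) (at t) \<and> h' t \<ge> 0" using hd by simp
  qed
  hence "h \<sigma> \<ge> 0" using \<sigma> by auto
  thus ?thesis using \<sigma> by (simp add: h_def z_def)
qed


lemma left_piece_upper:
  fixes v v' :: "real \<Rightarrow> real"
  assumes \<sigma>: "0 < \<sigma>" "\<sigma> \<le> 1/2" and lam: "lam > 0" "lam < 2/3"
    and vc: "continuous_on {0..\<sigma>} v" and v'c: "continuous_on {0..\<sigma>} v'"
    and vd: "\<And>t. t \<in> {0<..<\<sigma>} \<Longrightarrow> (v has_real_derivative v' t) (at t)"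
    and v'd: "\<And>t. t \<in> {0<..<\<sigma>} \<Longrightarrow> (v' has_real_derivative - (lam * gnl (v t))) (at t)"
    and r: "\<And>t. t \<in> {0..\<sigma>} \<Longrightarrow> 0 < v t \<and> v t < 1"
    and v0: "v' 0 = 0"
  shows "- v' \<sigma> / gnl (v \<sigma>) \<le> 1/2"
proof -
  define z where "z t = - v' t / gnl (v t)" for t
  have zc: "continuous_on {0..\<sigma>} z" unfolding z_def by (rule zcont[OF vc v'c r])
  define h where "h t = (lam + 1/3) * t - z t" for t
  define h' where "h' t = (lam + 1/3) - (lam + (2 * v t - 3 * (v t)^2) * (z t)^2)" for t
  have "\<forall>t\<in>{0..\<sigma>}. h t \<ge> 0"
  proof (rule barrier[of 0 \<sigma> h "1/2" h'])
    show "0 \<le> \<sigma>" using \<sigma> by simp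
    show "continuous_on {0..\<sigma>} h" unfolding h_def using zc by (intro continuous_intros)
    show "h 0 \<ge> 0" using v0 by (simp add: h_def z_def)
    show "(0::real) < 1/2" by simp
    fix t assume t: "t \<in> {0<..<\<sigma>}" "-(1/2) < h t" "h t < 0"
    have rt: "0 < v t" "v t < 1" using r[of t] t by auto
    have zd: "(z has_real_derivative lam + (2 * v t - 3 * (v t)^2) * (z t)^2) (at t)"
      unfolding z_def by (rule riccati[OF vd[OF t(1)] v'd[OF t(1)] rt])
    have yd: "((\<lambda>x. (lam + 1/3) * x) has_real_derivative (lam + 1/3) * 1) (at t)"
      by (intro DERIV_cmult DERIV_ident)
    have "((\<lambda>x. (lam + 1/3) * x - z x) has_real_derivative (lam + 1/3) * 1 - (lam + (2 * v t - 3 * (v t)^2) * (z t)^2)) (at t)"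
      by (rule DERIV_diff[OF yd zd])
    hence hd: "(h has_real_derivative h' t) (at t)"
      unfolding h_def h'_def by simp
    have y1: "0 \<le> (lam + 1/3) * t" using t lam by simp
    have y2: "(lam + 1/3) * t \<le> 1/2"
    proof -
      have "(lam + 1/3) * t \<le> 1 * (1/2)" using t lam \<sigma> by (intro mult_mono) auto
      thus ?thesis by simp
    qed
    have z1: "0 < z t" "z t < 1" using t(2,3) y1 y2 unfolding h_def by linarith+
    have zz: "(z t)^2 \<le> 1" using z1 by (simp add: power_le_one)
    have "h' t \<ge> 0" using gz_bounds(2)[OF rt, of "z t"] zz unfolding h'_def by linarith
    thus "(h has_real_derivative h' t) (at t) \<and> h' t \<ge> 0" using hd by simp
  qed
  hence "h \<sigma> \<ge> 0" using \<sigma> by auto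
  moreover have "(lam + 1/3) * \<sigma> \<le> 1/2"
  proof -
    have "(lam + 1/3) * \<sigma> \<le> 1 * (1/2)" using lam \<sigma> by (intro mult_mono) auto
    thus ?thesis by simp
  qed
  ultimately have "z \<sigma> \<le> 1/2" unfolding h_def by linarith
  thus ?thesis by (simp only: z_def)
qed

lemma mid_lower:
  fixes v v' :: "real \<Rightarrow> real"
  assumes pq: "p < q" "q - p < 1" and mu: "0 < mu" "mu \<le> s / 2"
    and vc: "continuous_on {p..q} v" and v'c: "continuous_on {p..q} v'"
    and vd: "\<And>t. t \<in> {p<..<q} \<Longrightarrow> (v has_real_derivative v' t) (at t)"
    and v'd: "\<And>t. t \<in> {p<..<q} \<Longrightarrow> (v' has_real_derivative - ((-mu) * gnl (v t))) (at t)"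
    and r: "\<And>t. t \<in> {p..q} \<Longrightarrow> 0 < v t \<and> v t < 1"
    and s: "0 < s" "s \<le> 1/2" and zp: "- v' p / gnl (v p) \<ge> s"
  shows "- v' q / gnl (v q) > 0"
proof -
  define z where "z t = - v' t / gnl (v t)" for t
  have zc: "continuous_on {p..q} z" unfolding z_def by (rule zcont[OF vc v'c r])
  define c0 where "c0 = s * (1 - (q - p))"
  have c0: "c0 > 0" using s pq by (simp add: c0_def)
  define h where "h t = z t - s * (1 - (t - p))" for t
  define h' where "h' t = (-mu + (2 * v t - 3 * (v t)^2) * (z t)^2) + s" for t
  have "\<forall>t\<in>{p..q}. h t \<ge> 0"
  proof (rule barrier[of p q h c0 h'])
    show "p \<le> q" using pq by simp
    show "continuous_on {p..q} h" unfolding h_def using zc by (intro continuous_intros)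
    have "z p \<ge> s" using zp by (simp only: z_def)
    moreover have "h p = z p - s" by (simp add: h_def)
    ultimately show "h p \<ge> 0" by linarith
    show "0 < c0" by (rule c0)
    fix t assume t: "t \<in> {p<..<q}" "-c0 < h t" "h t < 0"
    have rt: "0 < v t" "v t < 1" using r[of t] t by auto
    have zd: "(z has_real_derivative -mu + (2 * v t - 3 * (v t)^2) * (z t)^2) (at t)"
      unfolding z_def by (rule riccati[OF vd[OF t(1)] v'd[OF t(1)] rt])
    have yd: "((\<lambda>x. s * (1 - (x - p))) has_real_derivative s * (0 - (1 - 0))) (at t)"
      by (intro DERIV_cmult DERIV_diff DERIV_const DERIV_ident)
    have "((\<lambda>x. z x - s * (1 - (x - p))) has_real_derivative (-mu + (2 * v t - 3 * (v t)^2) * (z t)^2) - s * (0 - (1 - 0))) (at t)"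
      by (rule DERIV_diff[OF zd yd])
    hence hd: "(h has_real_derivative h' t) (at t)"
      unfolding h_def h'_def by simp
    have y1: "s * (1 - (t - p)) \<le> s" using t s by (simp add: mult_left_le)
    have y2: "s * (1 - (t - p)) \<ge> c0" unfolding c0_def using t s by (intro mult_left_mono) auto
    have z1: "0 < z t" "z t < s" using t(2,3) y1 y2 unfolding h_def by linarith+
    have zz: "(z t)^2 \<le> s^2" using z1 by (intro power_mono) auto
    have ss: "s^2 \<le> s / 2"
    proof -
      have "s * s \<le> s * (1/2)" using s by (intro mult_left_mono) auto
      thus ?thesis by (simp add: power2_eq_square)
    qed
    have "h' t \<ge> 0" using gz_bounds(1)[OF rt, of "z t"] zz ss mu unfolding h'_def by linarith
    thus "(h has_real_derivative h' t) (at t) \<and> h' t \<ge> 0" using hd by simp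
  qed
  hence "h q \<ge> 0" using pq by auto
  hence "z q \<ge> c0" by (simp add: h_def c0_def)
  thus ?thesis using c0 by (simp add: z_def)
qed

lemma mid_upper:
  fixes v v' :: "real \<Rightarrow> real"
  assumes pq: "p < q" and mu: "mu \<ge> 3/2" "4 / mu \<le> q - p"
    and vc: "continuous_on {p..q} v" and v'c: "continuous_on {p..q} v'"
    and vd: "\<And>t. t \<in> {p<..<q} \<Longrightarrow> (v has_real_derivative v' t) (at t)"
    and v'd: "\<And>t. t \<in> {p<..<q} \<Longrightarrow> (v' has_real_derivative - ((-mu) * gnl (v t))) (at t)"
    and r: "\<And>t. t \<in> {p..q} \<Longrightarrow> 0 < v t \<and> v t < 1"
    and zp: "- v' p / gnl (v p) \<le> 1/2"
  shows "- v' q / gnl (v q) \<le> -3/2"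
proof -
  define z where "z t = - v' t / gnl (v t)" for t
  have zc: "continuous_on {p..q} z" unfolding z_def by (rule zcont[OF vc v'c r])
  have zd: "(z has_real_derivative -mu + (2 * v t - 3 * (v t)^2) * (z t)^2) (at t)"
    and gzb: "(2 * v t - 3 * (v t)^2) * (z t)^2 \<le> (z t)^2 / 3" if t: "t \<in> {p<..<q}" for t
  proof -
    have rt: "0 < v t" "v t < 1" using r[of t] t by auto
    show "(z has_real_derivative -mu + (2 * v t - 3 * (v t)^2) * (z t)^2) (at t)"
      unfolding z_def by (rule riccati[OF vd[OF t] v'd[OF t] rt])
    show "(2 * v t - 3 * (v t)^2) * (z t)^2 \<le> (z t)^2 / 3" by (rule gz_bounds(2)[OF rt])
  qed
  have mu0: "mu > 0" using mu by simp
  define T where "T = p + 4 / mu"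
  have T: "p < T" "T \<le> q" using mu0 mu by (auto simp: T_def)
  define h1 where "h1 t = (1/2 - (mu/2) * (t - p)) - z t" for t
  define h1' where "h1' t = (0 - (mu/2) * (1 - 0)) - (-mu + (2 * v t - 3 * (v t)^2) * (z t)^2)" for t
  have "\<forall>t\<in>{p..T}. h1 t \<ge> 0"
  proof (rule barrier[of p T h1 1 h1'])
    show "p \<le> T" using T by simp
    show "continuous_on {p..T} h1" unfolding h1_def
      using continuous_on_subset[OF zc, of "{p..T}"] T by (intro continuous_intros) auto
    have "z p \<le> 1/2" using zp by (simp only: z_def)
    moreover have "h1 p = 1/2 - z p" by (simp add: h1_def)
    ultimately show "h1 p \<ge> 0" by linarith
    show "(0::real) < 1" by simp
    fix t assume t: "t \<in> {p<..<T}" "-1 < h1 t" "h1 t < 0"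
    have tq: "t \<in> {p<..<q}" using t T by auto
    have yd: "((\<lambda>x. 1/2 - (mu/2) * (x - p)) has_real_derivative 0 - (mu/2) * (1 - 0)) (at t)"
      by (intro DERIV_cmult DERIV_diff DERIV_const DERIV_ident)
    have "((\<lambda>x. (1/2 - (mu/2) * (x - p)) - z x) has_real_derivative (0 - (mu/2) * (1 - 0)) - (-mu + (2 * v t - 3 * (v t)^2) * (z t)^2)) (at t)"
      by (rule DERIV_diff[OF yd zd[OF tq]])
    hence hd: "(h1 has_real_derivative h1' t) (at t)"
      unfolding h1_def h1'_def by simp
    have y1: "(mu/2) * (t - p) \<le> 2"
    proof -
      have "(mu/2) * (t - p) \<le> (mu/2) * (4/mu)" using t mu0 by (intro mult_left_mono) (auto simp: T_def)
      thus ?thesis using mu0 by simp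
    qed
    have y2: "(mu/2) * (t - p) \<ge> 0" using t mu0 by simp
    have z1: "- 3/2 < z t" "z t < 3/2" using t(2,3) y1 y2 unfolding h1_def by linarith+
    have zz: "(z t)^2 \<le> 9/4"
    proof -
      have "\<bar>z t\<bar> \<le> 3/2" using z1 by auto
      hence "\<bar>z t\<bar>^2 \<le> (3/2)^2" by (intro power_mono) auto
      thus ?thesis by (simp add: power2_eq_square)
    qed
    have "h1' t = mu/2 - (2 * v t - 3 * (v t)^2) * (z t)^2" by (simp add: h1'_def)
    hence "h1' t \<ge> 0" using gzb[OF tq] zz mu by linarith
    thus "(h1 has_real_derivative h1' t) (at t) \<and> h1' t \<ge> 0" using hd by simp
  qed
  hence "h1 T \<ge> 0" using T by auto
  hence zT: "z T \<le> -3/2" using mu0 by (simp add: h1_def T_def)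
  define h2 where "h2 t = -3/2 - z t" for t
  define h2' where "h2' t = 0 - (-mu + (2 * v t - 3 * (v t)^2) * (z t)^2)" for t
  have "\<forall>t\<in>{T..q}. h2 t \<ge> 0"
  proof (rule barrier[of T q h2 1 h2'])
    show "T \<le> q" using T by simp
    show "continuous_on {T..q} h2" unfolding h2_def
      using continuous_on_subset[OF zc, of "{T..q}"] T by (intro continuous_intros) auto
    show "h2 T \<ge> 0" using zT by (simp add: h2_def)
    show "(0::real) < 1" by simp
    fix t assume t: "t \<in> {T<..<q}" "-1 < h2 t" "h2 t < 0"
    have tq: "t \<in> {p<..<q}" using t T by auto
    have "((\<lambda>x. -3/2 - z x) has_real_derivative 0 - (-mu + (2 * v t - 3 * (v t)^2) * (z t)^2)) (at t)"
      by (rule DERIV_diff[OF DERIV_const zd[OF tq]])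
    hence hd: "(h2 has_real_derivative h2' t) (at t)"
      unfolding h2_def h2'_def by simp
    have z1: "- 3/2 < z t" "z t < 3/2" using t(2,3) unfolding h2_def by linarith+
    have zz: "(z t)^2 \<le> 9/4"
    proof -
      have "\<bar>z t\<bar> \<le> 3/2" using z1 by auto
      hence "\<bar>z t\<bar>^2 \<le> (3/2)^2" by (intro power_mono) auto
      thus ?thesis by (simp add: power2_eq_square)
    qed
    have "h2' t = mu - (2 * v t - 3 * (v t)^2) * (z t)^2" by (simp add: h2'_def)
    hence "h2' t \<ge> 0" using gzb[OF tq] zz mu by linarith
    thus "(h2 has_real_derivative h2' t) (at t) \<and> h2' t \<ge> 0" using hd by simp
  qed
  hence "h2 q \<ge> 0" using T by auto
  thus ?thesis by (simp add: h2_def z_def)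
qed


lemma sol_facts:
  assumes \<sigma>: "0 < \<sigma>" "\<sigma> < 1/2" and sol: "is_solution \<sigma> lam mu u"
  obtains u' where
   "continuous_on {0..1} u" "continuous_on {0..1} u'"
   "\<And>t. t \<in> {0<..<1} \<Longrightarrow> (u has_real_derivative u' t) (at t)"
   "\<And>t. t \<in> {0<..<\<sigma>} \<Longrightarrow> (u' has_real_derivative - (lam * gnl (u t))) (at t)"
   "\<And>t. t \<in> {\<sigma><..<1-\<sigma>} \<Longrightarrow> (u' has_real_derivative - ((-mu) * gnl (u t))) (at t)"
   "\<And>t. t \<in> {1-\<sigma><..<1} \<Longrightarrow> (u' has_real_derivative - (lam * gnl (u t))) (at t)"
   "\<And>t. t \<in> {0..1} \<Longrightarrow> 0 < u t \<and> u t < 1"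
   "u' 0 = 0" "u' 1 = 0"
proof -
  obtain u' where ud: "\<forall>t\<in>{0..1}. (u has_real_derivative u' t) (at t within {0..1})"
    and u'c: "continuous_on {0..1} u'" and ac: "abs_cont_on 0 1 u'"
    and rng: "\<forall>t\<in>{0..1}. 0 < u t \<and> u t < 1"
    and ae: "AE t in lborel. t \<in> {0<..<1} \<longrightarrow>
              (u' has_real_derivative - (aw \<sigma> lam mu t * gnl (u t))) (at t)"
    and b0: "u' 0 = 0" and b1: "u' 1 = 0"
    using sol unfolding is_solution_def by blast
  from ae obtain N where N: "{x \<in> space lborel. \<not> (x \<in> {0<..<1} \<longrightarrow>
              (u' has_real_derivative - (aw \<sigma> lam mu x * gnl (u x))) (at x))} \<subseteq> N"
      "emeasure lborel N = 0" "N \<in> sets lborel"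
    by (rule AE_E)
  have Nn: "N \<in> null_sets lborel" using N by auto
  have Nd: "\<And>t. t \<in> {0<..<1} \<Longrightarrow> t \<notin> N \<Longrightarrow>
      (u' has_real_derivative - (aw \<sigma> lam mu t * gnl (u t))) (at t)"
    using N(1) by auto
  have uc: "continuous_on {0..1} u" using ud by (intro DERIV_continuous_on) auto
  have uda: "(u has_real_derivative u' t) (at t)" if "t \<in> {0<..<1}" for t
  proof -
    have "(u has_real_derivative u' t) (at t within {0..1})" using ud that by auto
    thus ?thesis using that by (simp add: at_within_Icc_at)
  qed
  have p1: "\<And>t. t \<in> {0<..<\<sigma>} \<Longrightarrow> (u' has_real_derivative - (lam * gnl (u t))) (at t)"
    by (rule piece_deriv[OF ud ac rng Nn Nd, of 0 \<sigma>]) (use \<sigma> in \<open>auto simp: aw_def\<close>)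
  have p2: "\<And>t. t \<in> {\<sigma><..<1-\<sigma>} \<Longrightarrow> (u' has_real_derivative - ((-mu) * gnl (u t))) (at t)"
    by (rule piece_deriv[OF ud ac rng Nn Nd, of \<sigma> "1-\<sigma>"]) (use \<sigma> in \<open>auto simp: aw_def\<close>)
  have p3: "\<And>t. t \<in> {1-\<sigma><..<1} \<Longrightarrow> (u' has_real_derivative - (lam * gnl (u t))) (at t)"
    by (rule piece_deriv[OF ud ac rng Nn Nd, of "1-\<sigma>" 1]) (use \<sigma> in \<open>auto simp: aw_def\<close>)
  show ?thesis by (rule that[OF uc u'c uda p1 p2 p3 _ b0 b1]) (use rng in auto)
qed


lemma no_sol_small_mu:
  assumes \<sigma>: "0 < \<sigma>" "\<sigma> < 1/2" and lam: "lam > 0" and mu: "0 < mu" "mu < min (lam * \<sigma>) 1 / 4"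
  shows "\<not> is_solution \<sigma> lam mu u"
proof
  assume sol: "is_solution \<sigma> lam mu u"
  obtain u' where uc: "continuous_on {0..1} u" and u'c: "continuous_on {0..1} u'"
    and ud: "\<And>t. t \<in> {0<..<1} \<Longrightarrow> (u has_real_derivative u' t) (at t)"
    and p1: "\<And>t. t \<in> {0<..<\<sigma>} \<Longrightarrow> (u' has_real_derivative - (lam * gnl (u t))) (at t)"
    and p2: "\<And>t. t \<in> {\<sigma><..<1-\<sigma>} \<Longrightarrow> (u' has_real_derivative - ((-mu) * gnl (u t))) (at t)"
    and p3: "\<And>t. t \<in> {1-\<sigma><..<1} \<Longrightarrow> (u' has_real_derivative - (lam * gnl (u t))) (at t)"
    and r: "\<And>t. t \<in> {0..1} \<Longrightarrow> 0 < u t \<and> u t < 1"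
    and b0: "u' 0 = 0" and b1: "u' 1 = 0"
    using sol_facts[OF \<sigma> sol] by metis
  define s where "s = min (lam * \<sigma> / 2) (1/2)"
  have s: "0 < s" "s \<le> lam * \<sigma> / 2" "s \<le> 1/2" using lam \<sigma> by (auto simp: s_def)
  have mus: "mu \<le> s / 2" using mu by (auto simp: s_def min_def)
  have zs: "- u' \<sigma> / gnl (u \<sigma>) \<ge> s"
  proof (rule left_piece_lower[of \<sigma> lam u u' s])
    show "continuous_on {0..\<sigma>} u" by (rule continuous_on_subset[OF uc]) (use \<sigma> in auto)
    show "continuous_on {0..\<sigma>} u'" by (rule continuous_on_subset[OF u'c]) (use \<sigma> in auto)
    show "\<And>t. t \<in> {0<..<\<sigma>} \<Longrightarrow> (u has_real_derivative u' t) (at t)" using ud \<sigma> by auto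
    show "\<And>t. t \<in> {0..\<sigma>} \<Longrightarrow> 0 < u t \<and> u t < 1" using r \<sigma> by auto
  qed (use \<sigma> lam s b0 p1 in auto)
  have zq: "- u' (1-\<sigma>) / gnl (u (1-\<sigma>)) > 0"
  proof (rule mid_lower[of \<sigma> "1-\<sigma>" mu s u u'])
    show "continuous_on {\<sigma>..1-\<sigma>} u" by (rule continuous_on_subset[OF uc]) (use \<sigma> in auto)
    show "continuous_on {\<sigma>..1-\<sigma>} u'" by (rule continuous_on_subset[OF u'c]) (use \<sigma> in auto)
    show "\<And>t. t \<in> {\<sigma><..<1-\<sigma>} \<Longrightarrow> (u has_real_derivative u' t) (at t)" using ud \<sigma> by auto
    show "\<And>t. t \<in> {\<sigma>..1-\<sigma>} \<Longrightarrow> 0 < u t \<and> u t < 1" using r \<sigma> by auto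
  qed (use \<sigma> mu mus s zs p2 in auto)
  have "0 < gnl (u (1-\<sigma>))" using r[of "1-\<sigma>"] \<sigma> gnl_bounds by auto
  hence neg: "u' (1-\<sigma>) < 0" using zq by (simp add: divide_less_0_iff)
  have "u' (1-\<sigma>) > u' 1"
  proof (rule DERIV_neg_imp_decreasing_open[of "1-\<sigma>" 1 u'])
    show "1 - \<sigma> < 1" using \<sigma> by simp
    show "continuous_on {1-\<sigma>..1} u'" by (rule continuous_on_subset[OF u'c]) (use \<sigma> in auto)
    fix x assume x: "1 - \<sigma> < x" "x < 1"
    hence "0 < gnl (u x)" using r[of x] \<sigma> gnl_bounds by auto
    hence "- (lam * gnl (u x)) < 0" using lam by simp
    thus "\<exists>y. (u' has_real_derivative y) (at x) \<and> y < 0" using p3[of x] x by auto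
  qed
  thus False using neg b1 by simp
qed

lemma no_sol_large_mu:
  assumes \<sigma>: "0 < \<sigma>" "\<sigma> < 1/2" and lam: "lam > 0" "lam < 2/3" and mu: "mu > 2 + 4 / (1 - 2 * \<sigma>)"
  shows "\<not> is_solution \<sigma> lam mu u"
proof
  assume sol: "is_solution \<sigma> lam mu u"
  obtain u' where uc: "continuous_on {0..1} u" and u'c: "continuous_on {0..1} u'"
    and ud: "\<And>t. t \<in> {0<..<1} \<Longrightarrow> (u has_real_derivative u' t) (at t)"
    and p1: "\<And>t. t \<in> {0<..<\<sigma>} \<Longrightarrow> (u' has_real_derivative - (lam * gnl (u t))) (at t)"
    and p2: "\<And>t. t \<in> {\<sigma><..<1-\<sigma>} \<Longrightarrow> (u' has_real_derivative - ((-mu) * gnl (u t))) (at t)"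
    and p3: "\<And>t. t \<in> {1-\<sigma><..<1} \<Longrightarrow> (u' has_real_derivative - (lam * gnl (u t))) (at t)"
    and r: "\<And>t. t \<in> {0..1} \<Longrightarrow> 0 < u t \<and> u t < 1"
    and b0: "u' 0 = 0" and b1: "u' 1 = 0"
    using sol_facts[OF \<sigma> sol] by metis
  have q0: "0 < 1 - 2 * \<sigma>" using \<sigma> by simp
  have mu2: "mu > 2" using mu q0 by (smt (verit) divide_pos_pos)
  have mu4: "4 / mu \<le> 1 - 2 * \<sigma>"
  proof -
    have "4 / (1 - 2 * \<sigma>) < mu" using mu by simp
    hence "4 < mu * (1 - 2 * \<sigma>)" using q0 by (simp add: divide_less_eq)
    thus ?thesis using mu2 by (simp add: divide_le_eq mult.commute)
  qed
  have zs: "- u' \<sigma> / gnl (u \<sigma>) \<le> 1/2"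
  proof (rule left_piece_upper[of \<sigma> lam u u'])
    show "continuous_on {0..\<sigma>} u" by (rule continuous_on_subset[OF uc]) (use \<sigma> in auto)
    show "continuous_on {0..\<sigma>} u'" by (rule continuous_on_subset[OF u'c]) (use \<sigma> in auto)
    show "\<And>t. t \<in> {0<..<\<sigma>} \<Longrightarrow> (u has_real_derivative u' t) (at t)" using ud \<sigma> by auto
    show "\<And>t. t \<in> {0..\<sigma>} \<Longrightarrow> 0 < u t \<and> u t < 1" using r \<sigma> by auto
  qed (use \<sigma> lam b0 p1 in auto)
  have zq: "- u' (1-\<sigma>) / gnl (u (1-\<sigma>)) \<le> -3/2"
  proof (rule mid_upper[of \<sigma> "1-\<sigma>" mu u u'])
    show "continuous_on {\<sigma>..1-\<sigma>} u" by (rule continuous_on_subset[OF uc]) (use \<sigma> in auto)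
    show "continuous_on {\<sigma>..1-\<sigma>} u'" by (rule continuous_on_subset[OF u'c]) (use \<sigma> in auto)
    show "\<And>t. t \<in> {\<sigma><..<1-\<sigma>} \<Longrightarrow> (u has_real_derivative u' t) (at t)" using ud \<sigma> by auto
    show "\<And>t. t \<in> {\<sigma>..1-\<sigma>} \<Longrightarrow> 0 < u t \<and> u t < 1" using r \<sigma> by auto
  qed (use \<sigma> mu2 mu4 zs p2 in auto)
  define v where "v = (\<lambda>t. u (1 - t))"
  define v' where "v' = (\<lambda>t. - u' (1 - t))"
  have zr: "- v' \<sigma> / gnl (v \<sigma>) \<le> 1/2"
  proof (rule left_piece_upper[of \<sigma> lam v v'])
    have cm: "continuous_on {0..\<sigma>} (\<lambda>t. 1 - t)" by (intro continuous_intros)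
    have im: "(\<lambda>t. 1 - t) ` {0..\<sigma>} \<subseteq> {0..1}" using \<sigma> by auto
    show "continuous_on {0..\<sigma>} v" unfolding v_def
      using continuous_on_compose2[OF uc cm im] .
    show "continuous_on {0..\<sigma>} v'" unfolding v'_def
      using continuous_on_compose2[OF u'c cm im] by (intro continuous_intros)
    fix t assume t: "t \<in> {0<..<\<sigma>}"
    have t1: "1 - t \<in> {0<..<1}" "1 - t \<in> {1-\<sigma><..<1}" using t \<sigma> by auto
    have md: "((\<lambda>t. 1 - t) has_real_derivative 0 - 1) (at t)" by (intro DERIV_diff DERIV_const DERIV_ident)
    have "((\<lambda>t. u (1 - t)) has_real_derivative u' (1 - t) * (0 - 1)) (at t)"
      by (rule DERIV_chain2[OF ud[OF t1(1)] md])
    thus "(v has_real_derivative v' t) (at t)" by (simp add: v_def v'_def)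
    have "((\<lambda>t. u' (1 - t)) has_real_derivative - (lam * gnl (u (1 - t))) * (0 - 1)) (at t)"
      by (rule DERIV_chain2[OF p3[OF t1(2)] md])
    hence "((\<lambda>t. - u' (1 - t)) has_real_derivative - (- (lam * gnl (u (1 - t))) * (0 - 1))) (at t)"
      by (rule DERIV_minus)
    thus "(v' has_real_derivative - (lam * gnl (v t))) (at t)" by (simp add: v_def v'_def)
  next
    fix t :: real assume "t \<in> {0..\<sigma>}"
    thus "0 < v t \<and> v t < 1" using r[of "1 - t"] \<sigma> by (simp add: v_def)
  qed (use \<sigma> lam b1 in \<open>auto simp: v'_def\<close>)
  hence "u' (1-\<sigma>) / gnl (u (1-\<sigma>)) \<le> 1/2" by (simp add: v_def v'_def)
  thus False using zq by simp
qed

theorem theorem1p1: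
  fixes \<sigma> :: real
  assumes "0 < \<sigma>" and "\<sigma> < 1/2"
  shows "\<exists>mu0s :: real \<Rightarrow> real.
           (\<forall>lam>0. mu0s lam > 0 \<and>
                 (\<forall>mu. 0 < mu \<and> mu < mu0s lam \<longrightarrow> \<not> (\<exists>u. is_solution \<sigma> lam mu u))) \<and>
           (\<exists>lams>0. \<forall>lam. 0 < lam \<and> lam < lams \<longrightarrow>
              (\<exists>mu0ss > mu0s lam. \<forall>mu>mu0ss. \<not> (\<exists>u. is_solution \<sigma> lam mu u)))"
proof (rule exI[of _ "\<lambda>lam. min (lam * \<sigma>) 1 / 4"], intro conjI)
  show "\<forall>lam>0. min (lam * \<sigma>) 1 / 4 > 0 \<and>
                 (\<forall>mu. 0 < mu \<and> mu < min (lam * \<sigma>) 1 / 4 \<longrightarrow> \<not> (\<exists>u. is_solution \<sigma> lam mu u))"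
  proof (intro allI impI)
    fix lam :: real assume lam: "lam > 0"
    have A: "min (lam * \<sigma>) 1 / 4 > 0" using lam assms by simp
    have B: "\<forall>mu. 0 < mu \<and> mu < min (lam * \<sigma>) 1 / 4 \<longrightarrow> \<not> (\<exists>u. is_solution \<sigma> lam mu u)"
      using no_sol_small_mu[OF assms lam] by blast
    show "min (lam * \<sigma>) 1 / 4 > 0 \<and>
                 (\<forall>mu. 0 < mu \<and> mu < min (lam * \<sigma>) 1 / 4 \<longrightarrow> \<not> (\<exists>u. is_solution \<sigma> lam mu u))"
      using A B by blast
  qed
next
  show "\<exists>lams>0. \<forall>lam. 0 < lam \<and> lam < lams \<longrightarrow>
          (\<exists>mu0ss > min (lam * \<sigma>) 1 / 4. \<forall>mu>mu0ss. \<not> (\<exists>u. is_solution \<sigma> lam mu u))"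
  proof (rule exI[of _ "2/3"], intro conjI allI impI)
    fix lam :: real assume lam: "0 < lam \<and> lam < 2/3"
    have q0: "0 < 1 - 2 * \<sigma>" using assms by simp
    have "min (lam * \<sigma>) 1 / 4 < 2 + 4 / (1 - 2 * \<sigma>)"
    proof -
      have "min (lam * \<sigma>) 1 / 4 \<le> 1/4" by simp
      moreover have "0 < 4 / (1 - 2 * \<sigma>)" using q0 by simp
      ultimately show ?thesis by linarith
    qed
    moreover have "\<forall>mu > 2 + 4 / (1 - 2 * \<sigma>). \<not> (\<exists>u. is_solution \<sigma> lam mu u)"
      using no_sol_large_mu[OF assms] lam by blast
    ultimately show "\<exists>mu0ss > min (lam * \<sigma>) 1 / 4. \<forall>mu>mu0ss. \<not> (\<exists>u. is_solution \<sigma> lam mu u)"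
      by blast
  qed simp
qed

end
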